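(* Let $G_n$ be the $n\times n$ honeycomb lattice embedded in a torus, and consider the set $\Omega$ of configurations of the 1-2 model on $G_n$, i.e. edge subsets $X$ such that every vertex is incident to exactly one or exactly two edges of $X$. Then any two elements of $\Omega$ can be connected by a finite sequence of elements of $\Omega$ in which consecutive elements differ by adding or deleting a single edge. Consequently the Markov chain on $\Omega$ that moves from $X$ to each such neighbour with positive probability (and stays put otherwise), as used for Glauber dynamics of the 1-2 model with signature $(0,c,b,a,a,b,c,0)$, $a,b,c>0$, is irreducible.
   Context: The 1-2 model is the vertex model on the honeycomb lattice whose signature at every vertex is $(0,c,b,a,a,b,c,0)$, indexed by the local configurations $000,001,\dots,111$ of the incident $(a,b,c)$-edges, with $a,b,c>0$; so the allowed configurations are exactly those with one or two edges present at each vertex. *)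

theory Defs
  imports Complex_Main
begin

text \<open>An edge is identified by its black endpoint and its type, so that the edge set
is a set of 3n^2 distinct edges even for small n (where parallel edges occur).\<close>

datatype vtx = Black nat nat | White nat nat
datatype etype = EA | EB | EC

type_synonym edge = "nat \<times> nat \<times> etype"

definition hc_vertices :: "nat \<Rightarrow> vtx set" where
  "hc_vertices n = {Black i j | i j. i < n \<and> j < n} \<union> {White i j | i j. i < n \<and> j < n}"

definition hc_edges :: "nat \<Rightarrow> edge set" where
  "hc_edges n = {(i, j, t) | i j t. i < n \<and> j < n}"

fun white_end :: "nat \<Rightarrow> edge \<Rightarrow> vtx" where
  "white_end n (i, j, EA) = White i j"
| "white_end n (i, j, EB) = White ((i + 1) mod n) j"
| "white_end n (i, j, EC) = White i ((j + 1) mod n)"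

definition hc_ends :: "nat \<Rightarrow> edge \<Rightarrow> vtx set" where
  "hc_ends n e = {Black (fst e) (fst (snd e)), white_end n e}"

definition hc_deg :: "nat \<Rightarrow> edge set \<Rightarrow> vtx \<Rightarrow> nat" where
  "hc_deg n X v = card {e \<in> X. v \<in> hc_ends n e}"

definition one_two_configs :: "nat \<Rightarrow> edge set set" where
  "one_two_configs n = {X. X \<subseteq> hc_edges n \<and>
      (\<forall>v \<in> hc_vertices n. hc_deg n X v = 1 \<or> hc_deg n X v = 2)}"

definition one_edge_apart :: "nat \<Rightarrow> edge set \<Rightarrow> edge set \<Rightarrow> bool" where
  "one_edge_apart n X Y \<longleftrightarrow> (\<exists>e \<in> hc_edges n. Y = X \<union> {e} \<and> e \<notin> X \<or> Y = X - {e} \<and> e \<in> X)"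

end

theory Submission
  imports Defs
begin

fun aedge :: "vtx \<Rightarrow> edge" where
  "aedge (Black i j) = (i, j, EA)" | "aedge (White i j) = (i, j, EA)"
fun swp :: "vtx \<Rightarrow> vtx" where
  "swp (Black i j) = White i j" | "swp (White i j) = Black i j"
definition bl :: "edge \<Rightarrow> vtx" where "bl e = Black (fst e) (fst (snd e))"
definition other :: "nat \<Rightarrow> vtx \<Rightarrow> edge \<Rightarrow> vtx" where
  "other n u e = (if u = bl e then white_end n e else bl e)"
definition A0 :: "nat \<Rightarrow> edge set" where "A0 n = {e \<in> hc_edges n. snd (snd e) = EA}"
definition dst :: "nat \<Rightarrow> edge set \<Rightarrow> nat" where
  "dst n X = card ((X - A0 n) \<union> (A0 n - X))"

lemma white_end_White: "\<exists>i j. white_end n e = White i j"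
  by (cases e; cases "snd (snd e)"; auto)

lemma bl_ne_white: "bl e \<noteq> white_end n e"
  using white_end_White[of n e] by (auto simp: bl_def)

lemma ends_other:
  assumes "u \<in> hc_ends n e"
  shows "hc_ends n e = {u, other n u e} \<and> other n u e \<noteq> u \<and> other n (other n u e) e = u
         \<and> other n u e \<in> hc_ends n e"
  using assms bl_ne_white[of e n] unfolding hc_ends_def other_def bl_def[symmetric]
  by auto

lemma ends_in_V:
  assumes "n \<ge> 1" "e \<in> hc_edges n" shows "hc_ends n e \<subseteq> hc_vertices n"
proof -
  obtain i j t where e: "e = (i, j, t)" "i < n" "j < n" using assms(2) by (auto simp: hc_edges_def)
  have "n > 0" using assms(1) by simp
  then show ?thesis using e by (cases t) (auto simp: hc_ends_def hc_vertices_def)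
qed

lemma etype_UNIV: "(UNIV :: etype set) = {EA, EB, EC}"
  by (metis etype.exhaust UNIV_eq_I insert_iff)

lemma finite_E: "finite (hc_edges n)"
proof -
  have "hc_edges n = {..<n} \<times> {..<n} \<times> UNIV" by (auto simp: hc_edges_def)
  then show ?thesis by (simp add: etype_UNIV)
qed

lemma finite_V: "finite (hc_vertices n)"
  unfolding hc_vertices_def by (simp add: finite_image_set2)

lemma aedge_facts:
  assumes "v \<in> hc_vertices n"
  shows "aedge v \<in> hc_edges n" "v \<in> hc_ends n (aedge v)" "snd (snd (aedge v)) = EA"
    "swp v \<in> hc_vertices n" "hc_ends n (aedge v) = {v, swp v}" "other n v (aedge v) = swp v"
    "aedge (swp v) = aedge v"
  using assms by (auto simp: hc_vertices_def hc_edges_def hc_ends_def other_def bl_def)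

lemma A_unique:
  assumes "snd (snd e) = EA" "u \<in> hc_ends n e" shows "e = aedge u"
  using assms by (cases e) (auto simp: hc_ends_def)

lemma deg_remove:
  assumes "f \<in> X" "finite X"
  shows "hc_deg n (X - {f}) v = (if v \<in> hc_ends n f then hc_deg n X v - 1 else hc_deg n X v)"
proof -
  have "{e \<in> X - {f}. v \<in> hc_ends n e} = {e \<in> X. v \<in> hc_ends n e} - {f}" by auto
  then show ?thesis using assms unfolding hc_deg_def
    by (auto simp: card_Diff_singleton)
qed

lemma deg_insert:
  assumes "f \<notin> X" "finite X"
  shows "hc_deg n (insert f X) v = (if v \<in> hc_ends n f then Suc (hc_deg n X v) else hc_deg n X v)"
proof -
  have "{e \<in> insert f X. v \<in> hc_ends n e} = (if v \<in> hc_ends n f then insert f {e \<in> X. v \<in> hc_ends n e} else {e \<in> X. v \<in> hc_ends n e})" by auto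
  then show ?thesis using assms unfolding hc_deg_def by auto
qed

lemma deg_ge2:
  assumes "f \<in> X" "g \<in> X" "f \<noteq> g" "v \<in> hc_ends n f" "v \<in> hc_ends n g" "finite X"
  shows "hc_deg n X v \<ge> 2"
proof -
  have "{f, g} \<subseteq> {e \<in> X. v \<in> hc_ends n e}" using assms by auto
  then have "card {f, g} \<le> hc_deg n X v" unfolding hc_deg_def
    by (intro card_mono) (use assms in auto)
  then show ?thesis using assms(3) by simp
qed

lemma step:
  assumes n1: "n \<ge> 1" and XO: "X \<in> one_two_configs n" and XA: "X \<noteq> A0 n"
  shows "\<exists>Y \<in> one_two_configs n. one_edge_apart n X Y \<and> dst n Y < dst n X"
proof (rule ccontr)
  assume H: "\<not> ?thesis"
  let ?V = "hc_vertices n" and ?E = "hc_edges n"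
  let ?d = "hc_deg n X"
  have XE: "X \<subseteq> ?E" and degs: "\<And>v. v \<in> ?V \<Longrightarrow> ?d v = 1 \<or> ?d v = 2"
    using XO by (auto simp: one_two_configs_def)
  have finX: "finite X" using XE finite_E finite_subset by blast
  have finD: "finite ((X - A0 n) \<union> (A0 n - X))"
    using finX finite_E by (auto simp: A0_def)
  have R: "\<exists>v \<in> hc_ends n f. ?d v \<noteq> 2" if f: "f \<in> X" "snd (snd f) \<noteq> EA" for f
  proof (rule ccontr)
    assume "\<not> ?thesis"
    then have d2: "\<And>v. v \<in> hc_ends n f \<Longrightarrow> ?d v = 2" by blast
    let ?Y = "X - {f}"
    have "?Y \<in> one_two_configs n"
      unfolding one_two_configs_def using XE degs d2 deg_remove[OF f(1) finX] by auto
    moreover have "one_edge_apart n X ?Y" using f XE by (auto simp: one_edge_apart_def)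
    moreover have "dst n ?Y < dst n X"
    proof -
      have "(?Y - A0 n) \<union> (A0 n - ?Y) = ((X - A0 n) \<union> (A0 n - X)) - {f}"
        using f by (auto simp: A0_def)
      moreover have "f \<in> (X - A0 n) \<union> (A0 n - X)" using f by (auto simp: A0_def)
      ultimately show ?thesis unfolding dst_def using finD card_Diff1_less by metis
    qed
    ultimately show False using H by blast
  qed
  have Ad: "?d v \<noteq> 1 \<or> ?d (swp v) \<noteq> 1" if v: "v \<in> ?V" "aedge v \<notin> X" for v
  proof (rule ccontr)
    assume "\<not> ?thesis"
    then have d1: "\<And>w. w \<in> hc_ends n (aedge v) \<Longrightarrow> ?d w = 1" using aedge_facts(5)[OF v(1)] by auto
    let ?Y = "insert (aedge v) X"
    have "?Y \<in> one_two_configs n"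
      unfolding one_two_configs_def using XE degs d1 deg_insert[OF v(2) finX] aedge_facts(1)[OF v(1)] by auto
    moreover have "one_edge_apart n X ?Y" using v aedge_facts(1)[OF v(1)] by (auto simp: one_edge_apart_def)
    moreover have "dst n ?Y < dst n X"
    proof -
      have "(?Y - A0 n) \<union> (A0 n - ?Y) = ((X - A0 n) \<union> (A0 n - X)) - {aedge v}"
        using v aedge_facts[OF v(1)] by (auto simp: A0_def)
      moreover have "aedge v \<in> (X - A0 n) \<union> (A0 n - X)" using v aedge_facts[OF v(1)] by (auto simp: A0_def)
      ultimately show ?thesis unfolding dst_def using finD card_Diff1_less by metis
    qed
    ultimately show False using H by blast
  qed
  define C where "C = {v \<in> ?V. ?d v = 2 \<and> aedge v \<notin> X}"
  define L where "L = {u \<in> ?V. ?d u = 1 \<and> (\<exists>f \<in> X. u \<in> hc_ends n f \<and> other n u f \<in> C)}"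
  define nb where "nb u = (SOME v. \<exists>f \<in> X. u \<in> hc_ends n f \<and> other n u f = v \<and> v \<in> C)" for u
  have one_edge: "\<exists>f0. {e \<in> X. u \<in> hc_ends n e} = {f0}" if "?d u = 1" for u
    using that unfolding hc_deg_def by (simp add: card_1_singleton_iff)
  have nb_eq: "nb u = other n u f" if hyp: "?d u = 1" "f \<in> X" "u \<in> hc_ends n f" "other n u f \<in> C" for u f
  proof -
    obtain f0 where f0: "{e \<in> X. u \<in> hc_ends n e} = {f0}" using one_edge hyp(1) by blast
    have fin: "f \<in> {e \<in> X. u \<in> hc_ends n e}" using hyp by simp
    have uniq: "g = f" if g: "g \<in> X" "u \<in> hc_ends n g" for g
    proof -
      have "g \<in> {e \<in> X. u \<in> hc_ends n e}" using g by simp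
      then show ?thesis using fin f0 by simp
    qed
    have "\<exists>g \<in> X. u \<in> hc_ends n g \<and> other n u g = nb u \<and> nb u \<in> C"
    proof -
      have "\<exists>v. \<exists>g \<in> X. u \<in> hc_ends n g \<and> other n u g = v \<and> v \<in> C" using hyp by blast
      from someI_ex[OF this] show ?thesis unfolding nb_def by simp
    qed
    then obtain g where g: "g \<in> X" "u \<in> hc_ends n g" "other n u g = nb u" by blast
    have "g = f" using uniq[OF g(1,2)] .
    then show ?thesis using g(3) by simp
  qed
  have nbL: "nb ` L = C"
  proof
    show "nb ` L \<subseteq> C" using nb_eq by (auto simp: L_def)
  next
    show "C \<subseteq> nb ` L"
    proof
      fix v assume vC: "v \<in> C"
      then have "?d v = 2" by (auto simp: C_def)
      then obtain f g where fg: "{e \<in> X. v \<in> hc_ends n e} = {f, g}" "f \<noteq> g"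
        unfolding hc_deg_def by (auto simp: card_2_iff)
      have fX: "f \<in> X" "v \<in> hc_ends n f" using fg by auto
      have fA: "snd (snd f) \<noteq> EA" using A_unique[of f v n] fX vC by (auto simp: C_def)
      obtain w where w: "w \<in> hc_ends n f" "?d w \<noteq> 2" using R[OF fX(1) fA] by blast
      have wv: "w = other n v f" using w ends_other[OF fX(2)] \<open>?d v = 2\<close> by auto
      have wV: "w \<in> ?V" using w ends_in_V[OF n1] XE fX by blast
      have w1: "?d w = 1" using degs[OF wV] w by auto
      have "other n w f = v" using wv ends_other[OF fX(2)] by simp
      then have "w \<in> L" "nb w = v" using wV w1 fX w vC nb_eq[of w f] by (auto simp: L_def)
      then show "v \<in> nb ` L" by blast
    qed
  qed
  have finV: "finite ?V" by (rule finite_V)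
  have LV: "L \<subseteq> ?V" and CV: "C \<subseteq> ?V" by (auto simp: L_def C_def)
  have swpLC: "swp ` L \<subseteq> C"
  proof
    fix x assume "x \<in> swp ` L"
    then obtain u where u: "u \<in> L" "x = swp u" by blast
    then obtain f where f: "?d u = 1" "f \<in> X" "u \<in> hc_ends n f" "other n u f \<in> C" "u \<in> ?V"
      by (auto simp: L_def)
    have ua: "aedge u \<notin> X"
    proof
      assume a: "aedge u \<in> X"
      obtain f0 where f0: "{e \<in> X. u \<in> hc_ends n e} = {f0}" using one_edge f(1) by blast
      have "f \<in> {e \<in> X. u \<in> hc_ends n e}" "aedge u \<in> {e \<in> X. u \<in> hc_ends n e}"
        using a f aedge_facts(2)[OF f(5)] by simp_all
      then have "f = aedge u" using f0 by simp
      then have "other n u f = swp u" using aedge_facts(6)[OF f(5)] by simp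
      then have "aedge (other n u f) = aedge u" using aedge_facts(7)[OF f(5)] by simp
      then show False using f(4) a by (auto simp: C_def)
    qed
    have "?d (swp u) \<noteq> 1" using Ad[OF f(5) ua] f(1) by auto
    then have "?d (swp u) = 2" using degs aedge_facts(4)[OF f(5)] by blast
    then show "x \<in> C" using u ua aedge_facts(4,7)[OF f(5)] by (auto simp: C_def)
  qed
  have "inj swp" by (rule injI) (case_tac x; case_tac y; auto)
  then have "card L \<le> card C"
    using card_inj_on_le[of swp L C] swpLC finite_subset[OF CV finV] by (auto simp: inj_on_def)
  moreover have "card C \<le> card L" using nbL card_image_le finite_subset[OF LV finV] by blast
  ultimately have "card (nb ` L) = card L" using nbL by simp
  then have injnb: "inj_on nb L" using eq_card_imp_inj_on finite_subset[OF LV finV] by blast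
  have Cempty: "C = {}"
  proof (rule ccontr)
    assume "C \<noteq> {}"
    then obtain v where vC: "v \<in> C" by blast
    then have "?d v = 2" by (auto simp: C_def)
    then obtain f g where fg: "{e \<in> X. v \<in> hc_ends n e} = {f, g}" "f \<noteq> g"
      unfolding hc_deg_def by (auto simp: card_2_iff)
    have "\<exists>w. w \<in> L \<and> nb w = v \<and> w = other n v h" if h: "h \<in> X" "v \<in> hc_ends n h" for h
    proof -
      have hA: "snd (snd h) \<noteq> EA" using A_unique[of h v n] h vC by (auto simp: C_def)
      obtain w where w: "w \<in> hc_ends n h" "?d w \<noteq> 2" using R[OF h(1) hA] by blast
      have wv: "w = other n v h" using w ends_other[OF h(2)] \<open>?d v = 2\<close> by auto
      have wV: "w \<in> ?V" using w ends_in_V[OF n1] XE h by blast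
      have w1: "?d w = 1" using degs[OF wV] w by auto
      have "other n w h = v" using wv ends_other[OF h(2)] by simp
      then show ?thesis using wV w1 h w vC nb_eq[of w h] wv by (auto simp: L_def)
    qed
    then obtain w1 w2 where w1: "w1 \<in> L" "nb w1 = v" "w1 = other n v f"
      and w2: "w2 \<in> L" "nb w2 = v" "w2 = other n v g" using fg by blast+
    have "w1 = w2" using injnb w1 w2 by (metis inj_on_def)
    then have "w1 \<in> hc_ends n f" "w1 \<in> hc_ends n g" using w1 w2 ends_other fg by blast+
    then have "?d w1 \<ge> 2" using deg_ge2 fg finX by blast
    then show False using w1 by (auto simp: L_def)
  qed
  have AX: "A0 n \<subseteq> X"
  proof
    fix e assume e: "e \<in> A0 n"
    then obtain i j where ij: "e = (i, j, EA)" "i < n" "j < n" by (auto simp: A0_def hc_edges_def)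
    let ?v = "Black i j"
    have vV: "?v \<in> ?V" using ij by (auto simp: hc_vertices_def)
    show "e \<in> X"
    proof (rule ccontr)
      assume "e \<notin> X"
      then have na: "aedge ?v \<notin> X" using ij by simp
      have "?d ?v = 2 \<or> ?d (swp ?v) = 2" using Ad[OF vV na] degs[OF vV] degs[OF aedge_facts(4)[OF vV]] by auto
      then have "?v \<in> C \<or> swp ?v \<in> C" using vV na aedge_facts(4,7)[OF vV] by (auto simp: C_def)
      then show False using Cempty by blast
    qed
  qed
  then obtain f where f: "f \<in> X" "f \<notin> A0 n" using XA by blast
  then have fA: "snd (snd f) \<noteq> EA" using XE by (auto simp: A0_def)
  obtain w where w: "w \<in> hc_ends n f" "?d w \<noteq> 2" using R[OF f(1) fA] by blast
  have wV: "w \<in> ?V" using w ends_in_V[OF n1] XE f by blast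
  have "aedge w \<in> X" using AX aedge_facts[OF wV] by (auto simp: A0_def)
  moreover have "aedge w \<noteq> f" using fA aedge_facts(3)[OF wV] by auto
  ultimately have "?d w \<ge> 2" using deg_ge2[of "aedge w" X f w n] f w aedge_facts(2)[OF wV] finX by blast
  then show False using degs[OF wV] w by auto
qed


lemma apart_sym: "one_edge_apart n X Y \<Longrightarrow> one_edge_apart n Y X"
  unfolding one_edge_apart_def by auto

lemma reach:
  assumes n1: "n \<ge> 1"
  shows "X \<in> one_two_configs n \<Longrightarrow>
    (\<lambda>U V. U \<in> one_two_configs n \<and> V \<in> one_two_configs n \<and> one_edge_apart n U V)\<^sup>*\<^sup>* X (A0 n)"
proof (induction "dst n X" arbitrary: X rule: less_induct)
  case less
  show ?case
  proof (cases "X = A0 n")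
    case True then show ?thesis by simp
  next
    case False
    then obtain Y where Y: "Y \<in> one_two_configs n" "one_edge_apart n X Y" "dst n Y < dst n X"
      using step[OF n1 less.prems] by blast
    have "(\<lambda>U V. U \<in> one_two_configs n \<and> V \<in> one_two_configs n \<and> one_edge_apart n U V)\<^sup>*\<^sup>* Y (A0 n)"
      using less.hyps[OF Y(3) Y(1)] .
    moreover have "one_edge_apart n X Y \<and> X \<in> one_two_configs n \<and> Y \<in> one_two_configs n" using Y less.prems by simp
    ultimately show ?thesis by (intro converse_rtranclp_into_rtranclp[of _ X Y]) auto
  qed
qed

theorem proposition7p1:
  fixes n :: nat and P :: "edge set \<Rightarrow> edge set \<Rightarrow> real"
  assumes "n \<ge> 1"
    and "\<And>X Y. X \<in> one_two_configs n \<Longrightarrow> Y \<in> one_two_configs n \<Longrightarrow>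
                 one_edge_apart n X Y \<Longrightarrow> P X Y > 0"
  shows "(\<forall>X \<in> one_two_configs n. \<forall>Y \<in> one_two_configs n.
            (\<lambda>U V. U \<in> one_two_configs n \<and> V \<in> one_two_configs n \<and> one_edge_apart n U V)\<^sup>*\<^sup>* X Y)
       \<and> (\<forall>X \<in> one_two_configs n. \<forall>Y \<in> one_two_configs n.
            (\<lambda>U V. U \<in> one_two_configs n \<and> V \<in> one_two_configs n \<and> P U V > 0)\<^sup>*\<^sup>* X Y)"
proof -
  let ?R = "\<lambda>U V. U \<in> one_two_configs n \<and> V \<in> one_two_configs n \<and> one_edge_apart n U V"
  let ?Q = "\<lambda>U V. U \<in> one_two_configs n \<and> V \<in> one_two_configs n \<and> P U V > 0"
  have conv: "?R\<inverse>\<inverse> = ?R" using apart_sym by (auto simp: fun_eq_iff)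
  have A: "\<forall>X \<in> one_two_configs n. \<forall>Y \<in> one_two_configs n. ?R\<^sup>*\<^sup>* X Y"
  proof (intro ballI)
    fix X Y assume X: "X \<in> one_two_configs n" and Y: "Y \<in> one_two_configs n"
    have 1: "?R\<^sup>*\<^sup>* X (A0 n)" using reach[OF assms(1) X] .
    have "?R\<^sup>*\<^sup>* Y (A0 n)" using reach[OF assms(1) Y] .
    then have "?R\<inverse>\<inverse>\<^sup>*\<^sup>* (A0 n) Y" by (rule rtranclp_converseI)
    then have "?R\<^sup>*\<^sup>* (A0 n) Y" using conv by simp
    then show "?R\<^sup>*\<^sup>* X Y" using 1 by simp
  qed
  have "?R \<le> ?Q" using assms(2) by auto
  then have "?R\<^sup>*\<^sup>* \<le> ?Q\<^sup>*\<^sup>*" by (rule rtranclp_mono)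
  then have "\<forall>X \<in> one_two_configs n. \<forall>Y \<in> one_two_configs n. ?Q\<^sup>*\<^sup>* X Y"
    using A by (auto simp: le_fun_def)
  with A show ?thesis by blast
qed

end
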